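(* Let $G$ be a totally bounded Abelian topological group with property $\mathfrak{h}$. Then $G$ has no infinite compact subsets.
   Context: $\mathbb{T}$ is the circle group. A subgroup $N$ of a topological Abelian group $G$ is $h$-embedded in $G$ if every group homomorphism $N\to\mathbb{T}$ extends to a continuous homomorphism $G\to\mathbb{T}$. $G$ has property $\mathfrak{h}$ if every countable subgroup of $G$ is $h$-embedded in $G$. *)

theory Defs
  imports "HOL-Analysis.Analysis" "HOL-Algebra.Group"
begin

definition topological_ab_group :: "('a, 'b) monoid_scheme \<Rightarrow> 'a topology \<Rightarrow> bool" where
  "topological_ab_group G X \<longleftrightarrow>
     comm_group G \<and> topspace X = carrier G \<and>
     continuous_map (prod_topology X X) X (\<lambda>(x, y). x \<otimes>\<^bsub>G\<^esub> y) \<and>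
     continuous_map X X (\<lambda>x. inv\<^bsub>G\<^esub> x)"

definition totally_bounded_group :: "('a, 'b) monoid_scheme \<Rightarrow> 'a topology \<Rightarrow> bool" where
  "totally_bounded_group G X \<longleftrightarrow>
     (\<forall>U. openin X U \<and> \<one>\<^bsub>G\<^esub> \<in> U \<longrightarrow>
        (\<exists>F. finite F \<and> F \<subseteq> carrier G \<and>
             carrier G = (\<Union>x\<in>F. {x \<otimes>\<^bsub>G\<^esub> u | u. u \<in> U})))"

definition circle_group :: "complex monoid" where
  "circle_group = \<lparr>carrier = sphere 0 1, mult = (*), one = 1\<rparr>"

definition circle_top :: "complex topology" where
  "circle_top = top_of_set (sphere 0 1)"

definition h_embedded :: "('a, 'b) monoid_scheme \<Rightarrow> 'a topology \<Rightarrow> 'a set \<Rightarrow> bool" where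
  "h_embedded G X N \<longleftrightarrow>
     (\<forall>f \<in> hom (G\<lparr>carrier := N\<rparr>) circle_group.
        \<exists>g \<in> hom G circle_group. continuous_map X circle_top g \<and> (\<forall>x\<in>N. g x = f x))"

definition property_h :: "('a, 'b) monoid_scheme \<Rightarrow> 'a topology \<Rightarrow> bool" where
  "property_h G X \<longleftrightarrow> (\<forall>N. subgroup N G \<and> countable N \<longrightarrow> h_embedded G X N)"

end

theory Submission
  imports Defs
begin


lemma unit_cis: assumes "norm (z::complex) = 1" obtains t where "z = cis t"
proof -
  obtain t where "z = Complex (cos t) (sin t)" using complex_unimodular_polar[OF assms] by blast
  then have "z = cis t" by (simp add: complex_eq_iff)
  then show ?thesis using that by blast
qed

lemma root_half:
  fixes v r :: complex and m :: nat
  assumes m: "m \<ge> 2" and v: "norm v = 1" and r: "norm r = 1"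
  shows "\<exists>w. norm w = 1 \<and> w ^ m = v \<and> Re (w * cnj r) \<le> 0"
proof -
  have rr: "r * cnj r = 1" using r by (metis complex_norm_square mult.commute norm_one of_real_1 power_one)
  define s where "s = v * cnj r ^ m"
  have ns: "norm s = 1" using v r by (simp add: s_def norm_mult norm_power)
  obtain t where t: "s = cis t" using unit_cis[OF ns] by blast
  define j :: int where "j = \<lceil>(real m * pi / 2 - t) / (2 * pi)\<rceil>"
  define th where "th = (t + 2 * pi * j) / real m"
  have mpos: "real m > 0" using m by simp
  have j1: "(real m * pi / 2 - t) / (2 * pi) \<le> j" unfolding j_def by linarith
  have j2: "j < (real m * pi / 2 - t) / (2 * pi) + 1" unfolding j_def by linarith
  have a1: "real m * pi / 2 \<le> t + 2 * pi * j" using j1 pi_gt_zero by (simp add: field_simps)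
  have a2: "t + 2 * pi * j < real m * pi / 2 + 2 * pi" using j2 pi_gt_zero by (simp add: field_simps)
  have th1: "pi / 2 \<le> th" using a1 mpos unfolding th_def by (simp add: field_simps)
  have "th < (real m * pi / 2 + 2 * pi) / real m" unfolding th_def using a2 mpos by (rule divide_strict_right_mono)
  also have "\<dots> = pi / 2 + 2 * pi / real m" using mpos by (simp add: field_simps)
  finally have "th < pi / 2 + 2 * pi / real m" .
  moreover have "2 * pi / real m \<le> pi" using m pi_gt_zero by (simp add: field_simps)
  ultimately have th2: "th \<le> 3 * pi / 2" by simp
  have "cos (th - pi) \<ge> 0" using th1 th2 by (intro cos_ge_zero) auto
  hence cth: "cos th \<le> 0" by (simp add: cos_diff)
  have "cis th ^ m = cis (real m * th)" by (rule Complex.DeMoivre)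
  also have "real m * th = t + 2 * pi * j" unfolding th_def using mpos by simp
  also have "cis (t + 2 * pi * j) = cis t * cis (2 * pi * j)" by (rule cis_mult[symmetric])
  also have "cis (2 * pi * j) = 1" by simp
  finally have cm: "cis th ^ m = s" using t by simp
  define w where "w = r * cis th"
  have "w ^ m = r ^ m * s" unfolding w_def using cm by (simp add: power_mult_distrib)
  also have "\<dots> = v * (r * cnj r) ^ m" unfolding s_def by (simp add: power_mult_distrib algebra_simps)
  finally have wm: "w ^ m = v" using rr by simp
  have "w * cnj r = cis th" unfolding w_def using rr by (simp add: algebra_simps)
  hence "Re (w * cnj r) \<le> 0" using cth by simp
  moreover have "norm w = 1" unfolding w_def using r by (simp add: norm_mult)
  ultimately show ?thesis using wm by blast
qed

lemma cos_nonpos_arc: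
  fixes n :: nat and k :: int and th :: real
  assumes n: "n \<ge> 1" and a: "(k + 1/4) / n \<le> th" and b: "th \<le> (k + 1/4) / n + 1 / (4 * real (n))"
  shows "cos (2 * pi * n * th) \<le> 0"
proof -
  have np: "real n > 0" using n by simp
  have a': "k + 1/4 \<le> n * th" using a np by (simp add: field_simps)
  have b': "n * th \<le> k + 1/2" using b np by (simp add: field_simps)
  define y where "y = 2 * pi * n * th - 2 * pi * k"
  have c: "cos (2 * pi * n * th) = cos y"
  proof -
    have "cos y = cos (2 * pi * n * th) * cos (2 * pi * k) + sin (2 * pi * n * th) * sin (2 * pi * k)"
      unfolding y_def by (rule cos_diff)
    also have "cos (2 * pi * k) = 1" using cos_int_2pin[of k] by simp
    also have "sin (2 * pi * k) = 0" using sin_int_2pin[of k] by simp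
    finally show ?thesis by simp
  qed
  have y1: "pi / 2 \<le> y"
  proof -
    have "2 * pi * (k + 1/4) \<le> 2 * pi * (n * th)" using a' pi_gt_zero by (intro mult_left_mono) auto
    then show ?thesis unfolding y_def by (simp add: algebra_simps)
  qed
  have y2: "y \<le> pi"
  proof -
    have "2 * pi * (n * th) \<le> 2 * pi * (k + 1/2)" using b' pi_gt_zero by (intro mult_left_mono) auto
    then show ?thesis unfolding y_def by (simp add: algebra_simps)
  qed
  have "cos (y - pi) \<ge> 0" using y1 y2 by (intro cos_ge_zero) auto
  hence "cos y \<le> 0" by (simp add: cos_diff)
  then show ?thesis using c by simp
qed

lemma interval_step:
  fixes n :: nat and l d :: real
  assumes n: "n \<ge> 1" and d: "5 \<le> 4 * real n * d"
  shows "\<exists>l'. l \<le> l' \<and> l' + 1 / (4 * real (n)) \<le> l + d \<and> (\<forall>th. l' \<le> th \<and> th \<le> l' + 1 / (4 * real (n)) \<longrightarrow> cos (2 * pi * n * th) \<le> 0)"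
proof -
  have np: "real n > 0" using n by simp
  define k :: int where "k = \<lceil>n * l - 1/4\<rceil>"
  have k1: "n * l - 1/4 \<le> k" unfolding k_def by linarith
  have k2: "k < n * l - 1/4 + 1" unfolding k_def by linarith
  define l' where "l' = (k + 1/4) / n"
  have "l \<le> l'" unfolding l'_def using k1 np by (simp add: field_simps)
  moreover have "l' + 1 / (4 * real (n)) \<le> l + d"
  proof -
    have "l' + 1 / (4 * real (n)) = (k + 1/2) / n" unfolding l'_def using np by (simp add: field_simps)
    also have "\<dots> \<le> (n * l + 5/4) / n" using k2 np by (intro divide_right_mono) auto
    also have "\<dots> = l + 5 / (4 * real (n))" using np by (simp add: field_simps)
    also have "5 / (4 * real (n)) \<le> d" using d np by (simp add: field_simps)
    finally show ?thesis by simp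
  qed
  moreover have "\<forall>th. l' \<le> th \<and> th \<le> l' + 1 / (4 * real (n)) \<longrightarrow> cos (2 * pi * n * th) \<le> 0"
    unfolding l'_def using cos_nonpos_arc[OF n] by blast
  ultimately show ?thesis by blast
qed

lemma infinite_nat_big: "infinite (S::nat set) \<Longrightarrow> \<exists>n\<in>S. n \<ge> k"
proof (rule ccontr)
  assume "infinite S" "\<not> (\<exists>n\<in>S. n \<ge> k)"
  then have "S \<subseteq> {..<k}" by auto
  then show False using \<open>infinite S\<close> finite_subset by blast
qed

lemma num_nat:
  fixes P :: "nat set"
  assumes P: "infinite P"
  shows "\<exists>th. infinite {n\<in>P. cos (2 * pi * n * th) \<le> 0}"
proof -
  define PP where "PP = (\<lambda>(j::nat) (nl :: nat \<times> real). fst nl \<in> P \<and> fst nl \<ge> 1 \<and>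
     (\<forall>th. snd nl \<le> th \<and> th \<le> snd nl + 1 / (4 * real (fst nl)) \<longrightarrow> cos (2 * pi * fst nl * th) \<le> 0))"
  define QQ where "QQ = (\<lambda>(j::nat) (nl :: nat \<times> real) (nl' :: nat \<times> real). fst nl < fst nl' \<and> snd nl \<le> snd nl' \<and>
     snd nl' + 1 / (4 * real (fst nl')) \<le> snd nl + 1 / (4 * real (fst nl)))"
  have "\<exists>f. \<forall>j. PP j (f j) \<and> QQ j (f j) (f (Suc j))"
  proof (rule dependent_nat_choice)
    obtain n0 where n0: "n0 \<in> P" "n0 \<ge> 1" using infinite_nat_big[OF P, of 1] by blast
    have "5 \<le> 4 * real n0 * 2" using n0 by simp
    then obtain l where "(\<forall>th. l \<le> th \<and> th \<le> l + 1 / (4 * real (n0)) \<longrightarrow> cos (2 * pi * n0 * th) \<le> 0)"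
      using interval_step[OF n0(2), of 2 0] by blast
    then show "\<exists>x. PP 0 x" unfolding PP_def using n0 by (intro exI[of _ "(n0, l)"]) auto
  next
    fix x j assume "PP j x"
    obtain n l where x: "x = (n, l)" by fastforce
    have n1: "n \<ge> 1" using \<open>PP j x\<close> x unfolding PP_def by simp
    obtain n' where n': "n' \<in> P" "n' \<ge> 5 * n + 1" using infinite_nat_big[OF P] by blast
    have n'1: "n' \<ge> 1" using n' by simp
    have "5 \<le> 4 * real n' * (1 / (4 * real n))" using n' n1 by (simp add: field_simps)
    then obtain l' where l': "l \<le> l'" "l' + 1 / (4 * real (n')) \<le> l + 1 / (4 * real (n))"
      "\<forall>th. l' \<le> th \<and> th \<le> l' + 1 / (4 * real (n')) \<longrightarrow> cos (2 * pi * n' * th) \<le> 0"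
      using interval_step[OF n'1, of "1 / (4 * real (n))" l] by blast
    show "\<exists>y. PP (Suc j) y \<and> QQ j x y"
      unfolding PP_def QQ_def x using n' n'1 l' n1 by (intro exI[of _ "(n', l')"]) auto
  qed
  then obtain f where f: "\<And>j. PP j (f j)" "\<And>j. QQ j (f j) (f (Suc j))" by blast
  define ns where "ns = (\<lambda>j. fst (f j))"
  define ls where "ls = (\<lambda>j. snd (f j))"
  define us where "us = (\<lambda>j. ls j + 1 / (4 * real (ns j)))"
  have inc: "incseq ls" using f(2) unfolding QQ_def ls_def by (intro incseq_SucI) auto
  have dec: "decseq us" using f(2) unfolding QQ_def ls_def us_def ns_def by (intro decseq_SucI) auto
  have sm: "strict_mono ns" using f(2) unfolding QQ_def ns_def strict_mono_Suc_iff by auto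
  have lu: "ls i \<le> us j" for i j
  proof (cases "i \<le> j")
    case True
    then have "ls i \<le> ls j" using inc by (simp add: incseq_def)
    also have "ls j \<le> us j" unfolding us_def by simp
    finally show ?thesis .
  next
    case False
    then have "us i \<le> us j" using dec by (simp add: decseq_def)
    moreover have "ls i \<le> us i" unfolding us_def by simp
    ultimately show ?thesis by simp
  qed
  define th where "th = (SUP j. ls j)"
  have bdd: "bdd_above (range ls)" using lu by (intro bdd_aboveI[of _ "us 0"]) auto
  have th1: "ls j \<le> th" for j unfolding th_def using bdd by (simp add: cSUP_upper)
  have th2: "th \<le> us j" for j unfolding th_def using lu by (intro cSUP_least) auto
  have "range ns \<subseteq> {n\<in>P. cos (2 * pi * n * th) \<le> 0}"
  proof
    fix n assume "n \<in> range ns"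
    then obtain j where j: "n = ns j" by blast
    have "PP j (f j)" by (rule f(1))
    then show "n \<in> {n\<in>P. cos (2 * pi * n * th) \<le> 0}"
      unfolding PP_def j ns_def using th1[of j] th2[of j] unfolding ls_def us_def ns_def by auto
  qed
  moreover have "infinite (range ns)"
    using sm strict_mono_imp_inj_on finite_imageD infinite_UNIV_nat by blast
  ultimately show ?thesis using finite_subset by blast
qed

lemma num_int:
  fixes M :: "int set"
  assumes M: "infinite M"
  shows "\<exists>z. norm z = 1 \<and> infinite {n\<in>M. Re (z powi n) \<le> 0}"
proof -
  have Re_cis_pow: "Re (cis (2 * pi * th) powi n) = cos (2 * pi * nat \<bar>n\<bar> * th)" for th and n :: int
  proof -
    have "Re (cis (2 * pi * th) powi n) = cos (of_int n * (2 * pi * th))" by (simp add: cis_power_int)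
    also have "\<dots> = cos (of_int \<bar>n\<bar> * (2 * pi * th))" by (cases "n \<ge> 0") auto
    also have "\<dots> = cos (2 * pi * nat \<bar>n\<bar> * th)" by (simp add: algebra_simps)
    finally show ?thesis .
  qed
  have "M \<subseteq> {n\<in>M. n \<ge> 0} \<union> {n\<in>M. n \<le> 0}" by auto
  then have "infinite {n\<in>M. n \<ge> 0} \<or> infinite {n\<in>M. n \<le> 0}" using M finite_subset by auto
  then obtain M1 where M1: "M1 \<subseteq> M" "infinite M1" "inj_on (\<lambda>n. nat \<bar>n\<bar>) M1"
  proof
    assume "infinite {n\<in>M. n \<ge> 0}"
    moreover have "inj_on (\<lambda>n. nat \<bar>n\<bar>) {n\<in>M. n \<ge> 0}" by (rule inj_onI) auto
    ultimately show thesis using that[of "{n\<in>M. n \<ge> 0}"] by auto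
  next
    assume "infinite {n\<in>M. n \<le> 0}"
    moreover have "inj_on (\<lambda>n. nat \<bar>n\<bar>) {n\<in>M. n \<le> 0}" by (rule inj_onI) auto
    ultimately show thesis using that[of "{n\<in>M. n \<le> 0}"] by auto
  qed
  define P where "P = (\<lambda>n. nat \<bar>n\<bar>) ` M1"
  have P: "infinite P" unfolding P_def using M1 finite_imageD by blast
  obtain th where th: "infinite {n\<in>P. cos (2 * pi * n * th) \<le> 0}" using num_nat[OF P] by blast
  have "{n\<in>P. cos (2 * pi * n * th) \<le> 0} \<subseteq> (\<lambda>n. nat \<bar>n\<bar>) ` {n\<in>M. Re (cis (2 * pi * th) powi n) \<le> 0}"
    unfolding P_def using M1(1) Re_cis_pow by auto
  then have "infinite {n\<in>M. Re (cis (2 * pi * th) powi n) \<le> 0}" using th finite_subset by blast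
  then show ?thesis by (intro exI[of _ "cis (2 * pi * th)"]) simp
qed



definition span1 :: "('a,'b) monoid_scheme \<Rightarrow> 'a set \<Rightarrow> 'a \<Rightarrow> 'a set" where
  "span1 G H e = {h \<otimes>\<^bsub>G\<^esub> e [^]\<^bsub>G\<^esub> (c::int) | h c. h \<in> H}"

primrec spanl :: "('a,'b) monoid_scheme \<Rightarrow> 'a list \<Rightarrow> 'a set" where
  "spanl G [] = {\<one>\<^bsub>G\<^esub>}"
| "spanl G (f#fs) = span1 G (spanl G fs) f"

lemma hom_sub_iff:
  "\<phi> \<in> hom (G\<lparr>carrier := H\<rparr>) circle_group \<longleftrightarrow>
    (\<forall>x\<in>H. \<phi> x \<in> sphere 0 1) \<and> (\<forall>x\<in>H. \<forall>y\<in>H. \<phi> (x \<otimes>\<^bsub>G\<^esub> y) = \<phi> x * \<phi> y)"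
  by (auto simp: hom_def circle_group_def Pi_def)

lemma hom_full_iff:
  "\<phi> \<in> hom G circle_group \<longleftrightarrow>
    (\<forall>x\<in>carrier G. \<phi> x \<in> sphere 0 1) \<and> (\<forall>x\<in>carrier G. \<forall>y\<in>carrier G. \<phi> (x \<otimes>\<^bsub>G\<^esub> y) = \<phi> x * \<phi> y)"
  by (auto simp: hom_def circle_group_def Pi_def)

lemma span1I: "h \<in> H \<Longrightarrow> x = h \<otimes>\<^bsub>G\<^esub> e [^]\<^bsub>G\<^esub> (c::int) \<Longrightarrow> x \<in> span1 G H e"
  unfolding span1_def by blast

lemma span1E: "x \<in> span1 G H e \<Longrightarrow> (\<And>h c. h \<in> H \<Longrightarrow> x = h \<otimes>\<^bsub>G\<^esub> e [^]\<^bsub>G\<^esub> (c::int) \<Longrightarrow> P) \<Longrightarrow> P"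
  unfolding span1_def by blast

context comm_group
begin

lemma span1_subgroup:
  assumes H: "subgroup H G" and e: "e \<in> carrier G"
  shows "subgroup (span1 G H e) G"
proof (rule subgroupI)
  have Hc: "H \<subseteq> carrier G" using H subgroup.subset by blast
  show "span1 G H e \<subseteq> carrier G" using Hc e by (auto elim!: span1E)
  show "span1 G H e \<noteq> {}" using span1I[OF subgroup.one_closed[OF H] refl] by blast
  fix a assume "a \<in> span1 G H e"
  then obtain h c where h: "h \<in> H" and a: "a = h \<otimes> e [^] (c::int)" by (auto elim!: span1E)
  have hc: "h \<in> carrier G" using h Hc by auto
  have "inv a = inv h \<otimes> e [^] (-c)"
    using a hc e by (metis inv_mult int_pow_closed int_pow_neg)
  moreover have "inv h \<in> H" by (rule subgroup.m_inv_closed[OF H h])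
  ultimately show "inv a \<in> span1 G H e" by (metis span1I)
next
  have Hc: "H \<subseteq> carrier G" using H subgroup.subset by blast
  fix a b assume "a \<in> span1 G H e" "b \<in> span1 G H e"
  then obtain h c h' c' where h: "h \<in> H" "h' \<in> H" and a: "a = h \<otimes> e [^] (c::int)" and b: "b = h' \<otimes> e [^] (c'::int)"
    by (auto elim!: span1E)
  have hc: "h \<in> carrier G" "h' \<in> carrier G" using h Hc by auto
  have "a \<otimes> b = (h \<otimes> h') \<otimes> e [^] (c + c')"
    proof -
    have p: "e [^] (c+c') = e[^]c \<otimes> e[^]c'" by (rule int_pow_mult[OF e])
    show ?thesis unfolding a b p using hc e by (simp add: m_ac)
  qed
  moreover have "h \<otimes> h' \<in> H" by (rule subgroup.m_closed[OF H h])
  ultimately show "a \<otimes> b \<in> span1 G H e" by (metis span1I)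
qed

lemma span1_sup:
  assumes H: "subgroup H G" and e: "e \<in> carrier G"
  shows "H \<subseteq> span1 G H e" "e \<in> span1 G H e"
proof -
  have Hc: "H \<subseteq> carrier G" using H subgroup.subset by blast
  show "H \<subseteq> span1 G H e"
  proof
    fix h assume "h \<in> H"
    then have "h = h \<otimes> e [^] (0::int)" using Hc by auto
    then show "h \<in> span1 G H e" using \<open>h \<in> H\<close> by (rule span1I[rotated])
  qed
  have "e = \<one> \<otimes> e [^] (1::int)" using e by simp
  then show "e \<in> span1 G H e" using H subgroup.one_closed by (metis span1I)
qed

lemma spanl_subgroup: "set fs \<subseteq> carrier G \<Longrightarrow> subgroup (spanl G fs) G"
proof (induction fs)
  case Nil
  then show ?case by (simp add: triv_subgroup)
next
  case (Cons a fs)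
  then show ?case by (simp add: span1_subgroup)
qed



lemma chr_one:
  assumes H: "subgroup H G" and ch: "\<phi> \<in> hom (G\<lparr>carrier := H\<rparr>) circle_group"
  shows "\<phi> \<one> = 1"
proof -
  have o: "\<one> \<in> H" by (rule subgroup.one_closed[OF H])
  have m: "\<phi> (\<one> \<otimes> \<one>) = \<phi> \<one> * \<phi> \<one>" using ch o unfolding hom_sub_iff by blast
  have n: "norm (\<phi> \<one>) = 1" using ch o unfolding hom_sub_iff by simp
  have "\<phi> \<one> = 0 \<or> \<phi> \<one> = 1" using m by simp
  then show ?thesis using n by auto
qed

lemma chr_inv:
  assumes H: "subgroup H G" and ch: "\<phi> \<in> hom (G\<lparr>carrier := H\<rparr>) circle_group" and x: "x \<in> H"
  shows "\<phi> (inv x) = inverse (\<phi> x)"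
proof -
  have Hc: "H \<subseteq> carrier G" by (rule subgroup.subset[OF H])
  have ix: "inv x \<in> H" by (rule subgroup.m_inv_closed[OF H x])
  have "\<phi> (inv x \<otimes> x) = \<phi> (inv x) * \<phi> x" using ch ix x by (simp add: hom_sub_iff)
  moreover have "inv x \<otimes> x = \<one>" using x Hc by auto
  ultimately have "\<phi> (inv x) * \<phi> x = 1" using chr_one[OF H ch] by simp
  then show ?thesis using inverse_unique[of "\<phi> x" "\<phi> (inv x)"] by (simp add: mult.commute)
qed

lemma chr_int_pow:
  assumes H: "subgroup H G" and ch: "\<phi> \<in> hom (G\<lparr>carrier := H\<rparr>) circle_group" and x: "x \<in> H"
  shows "\<phi> (x [^] (c::int)) = \<phi> x powi c"
proof -
  have Hc: "H \<subseteq> carrier G" by (rule subgroup.subset[OF H])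
  have xc: "x \<in> carrier G" using x Hc by auto
  have nat: "x [^] (n::nat) \<in> H \<and> \<phi> (x [^] n) = \<phi> x ^ n" for n
  proof (induction n)
    case 0
    then show ?case using chr_one[OF H ch] subgroup.one_closed[OF H] by simp
  next
    case (Suc n)
    then have "x [^] n \<otimes> x \<in> H" using subgroup.m_closed[OF H _ x] by simp
    moreover have "\<phi> (x [^] n \<otimes> x) = \<phi> (x [^] n) * \<phi> x" using ch Suc x by (simp add: hom_sub_iff)
    ultimately show ?case using Suc by (simp add: mult.commute)
  qed
  show ?thesis
  proof (cases "c \<ge> 0")
    case True
    then have "x [^] c = x [^] (nat c)" by (simp add: pow_nat)
    then show ?thesis using nat[of "nat c"] True by (simp add: power_int_def)
  next
    case False
    then have "x [^] c = inv (x [^] (nat (-c)))" by (subst int_pow_def2) simp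
    then show ?thesis using nat[of "nat (-c)"] chr_inv[OF H ch] False by (simp add: power_int_def power_inverse)
  qed
qed

lemma subgroup_int_pow:
  assumes H: "subgroup H G" and x: "x \<in> H"
  shows "x [^] (c::int) \<in> H"
proof -
  have nat: "x [^] (n::nat) \<in> H" for n
  proof (induction n)
    case 0
    then show ?case using subgroup.one_closed[OF H] by simp
  next
    case (Suc n)
    then show ?case using subgroup.m_closed[OF H _ x] by simp
  qed
  show ?thesis
  proof (cases "c \<ge> 0")
    case True
    then show ?thesis using nat[of "nat c"] by (simp add: pow_nat)
  next
    case False
    then have "x [^] c = inv (x [^] (nat (-c)))" by (subst int_pow_def2) simp
    then show ?thesis using nat[of "nat (-c)"] subgroup.m_inv_closed[OF H] by simp
  qed
qed

lemma ext_char: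
  assumes H: "subgroup H G" and ch: "\<phi> \<in> hom (G\<lparr>carrier := H\<rparr>) circle_group"
    and e: "e \<in> carrier G" and w: "norm w = 1"
    and cnd: "\<And>c::int. e [^] c \<in> H \<Longrightarrow> \<phi> (e [^] c) = w powi c"
  shows "\<exists>\<psi>. \<psi> \<in> hom (G\<lparr>carrier := span1 G H e\<rparr>) circle_group \<and> (\<forall>x\<in>H. \<psi> x = \<phi> x) \<and> \<psi> e = w"
proof -
  have Hc: "H \<subseteq> carrier G" by (rule subgroup.subset[OF H])
  have w0: "w \<noteq> 0" using w by auto
  have key: "\<phi> h * w powi c = \<phi> h' * w powi c'"
    if h: "h \<in> H" "h' \<in> H" and eq: "h \<otimes> e [^] c = h' \<otimes> e [^] c'" for h h' c c'
  proof -
    have hc: "h \<in> carrier G" "h' \<in> carrier G" using h Hc by auto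
    have "e [^] (c - c') = e [^] c \<otimes> inv (e [^] c')" using e by (rule int_pow_diff)
    also have "\<dots> = inv h \<otimes> h'"
    proof -
      have ec: "e [^] c \<in> carrier G" "e [^] c' \<in> carrier G" using e by auto
      have "(inv h \<otimes> h') \<otimes> e [^] c' = inv h \<otimes> (h' \<otimes> e [^] c')" using hc ec by (simp add: m_assoc)
      also have "\<dots> = inv h \<otimes> (h \<otimes> e [^] c)" using eq by simp
      also have "\<dots> = e [^] c" using hc ec by (simp add: m_assoc[symmetric])
      finally have "(inv h \<otimes> h') \<otimes> e [^] c' = e [^] c" .
      then show ?thesis using inv_solve_right'[of "inv h \<otimes> h'" "e [^] c" "e [^] c'"] hc ec by simp
    qed
    finally have ee: "e [^] (c - c') = inv h \<otimes> h'" .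
    have ih: "inv h \<in> H" by (rule subgroup.m_inv_closed[OF H h(1)])
    have mem: "inv h \<otimes> h' \<in> H" by (rule subgroup.m_closed[OF H ih h(2)])
    have "\<phi> (inv h \<otimes> h') = w powi (c - c')" using cnd[of "c - c'"] ee mem by simp
    moreover have "\<phi> (inv h \<otimes> h') = inverse (\<phi> h) * \<phi> h'"
      using ch ih h chr_inv[OF H ch h(1)] by (simp add: hom_sub_iff)
    ultimately have q: "inverse (\<phi> h) * \<phi> h' = w powi (c - c')" by simp
    have nz: "\<phi> h \<noteq> 0" using ch h unfolding hom_sub_iff by fastforce
    have "\<phi> h' = \<phi> h * (inverse (\<phi> h) * \<phi> h')" using nz by simp
    then have "\<phi> h' = \<phi> h * w powi (c - c')" using q by simp
    then show ?thesis using w0 by (simp add: power_int_diff field_simps)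
  qed
  define sel where "sel = (\<lambda>x. SOME p. fst p \<in> H \<and> x = fst p \<otimes> e [^] (snd p :: int))"
  define \<psi> where "\<psi> = (\<lambda>x. \<phi> (fst (sel x)) * w powi (snd (sel x)))"
  have val: "\<psi> (h \<otimes> e [^] c) = \<phi> h * w powi c" if h: "h \<in> H" for h c
  proof -
    let ?x = "h \<otimes> e [^] c"
    have "\<exists>p. fst p \<in> H \<and> ?x = fst p \<otimes> e [^] (snd p :: int)" using h by (intro exI[of _ "(h, c)"]) simp
    then have s: "fst (sel ?x) \<in> H \<and> ?x = fst (sel ?x) \<otimes> e [^] (snd (sel ?x) :: int)"
      unfolding sel_def by (rule someI_ex)
    show ?thesis unfolding \<psi>_def using key[OF s[THEN conjunct1] h] s by simp
  qed
  have hom: "\<psi> \<in> hom (G\<lparr>carrier := span1 G H e\<rparr>) circle_group"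
    unfolding hom_sub_iff
  proof (intro conjI ballI)
    fix x assume "x \<in> span1 G H e"
    then obtain h c where h: "h \<in> H" and x: "x = h \<otimes> e [^] (c::int)" by (rule span1E)
    have "norm (\<phi> h) = 1" using ch h by (auto simp: hom_sub_iff)
    then show "\<psi> x \<in> sphere 0 1" using val[OF h] x w by (simp add: norm_mult norm_power_int)
  next
    fix x y assume "x \<in> span1 G H e" "y \<in> span1 G H e"
    then obtain h c h' c' where h: "h \<in> H" "h' \<in> H" and x: "x = h \<otimes> e [^] (c::int)"
      and y: "y = h' \<otimes> e [^] (c'::int)" by (metis span1E)
    have hc: "h \<in> carrier G" "h' \<in> carrier G" using h Hc by auto
    have xy: "x \<otimes> y = (h \<otimes> h') \<otimes> e [^] (c + c')"
    proof -
      have p: "e [^] (c+c') = e[^]c \<otimes> e[^]c'" by (rule int_pow_mult[OF e])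
      show ?thesis unfolding x y p using hc e by (simp add: m_ac)
    qed
    have hh: "h \<otimes> h' \<in> H" by (rule subgroup.m_closed[OF H h])
    have "\<phi> (h \<otimes> h') = \<phi> h * \<phi> h'" using ch h by (simp add: hom_sub_iff)
    then have 1: "\<psi> (x \<otimes> y) = \<phi> h * \<phi> h' * w powi (c + c')" using xy val[OF hh] by simp
    have 2: "\<psi> x = \<phi> h * w powi c" "\<psi> y = \<phi> h' * w powi c'" using x y val h by auto
    show "\<psi> (x \<otimes> y) = \<psi> x * \<psi> y" unfolding 1 2 using w0 by (simp add: power_int_add ac_simps)
  qed
  have ext: "\<forall>x\<in>H. \<psi> x = \<phi> x"
  proof
    fix x assume x: "x \<in> H"
    have "x = x \<otimes> e [^] (0::int)" using x Hc by auto
    then show "\<psi> x = \<phi> x" using val[OF x, of 0] by simp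
  qed
  have "e = \<one> \<otimes> e [^] (1::int)" using e by simp
  then have "\<psi> e = w" using val[OF subgroup.one_closed[OF H], of 1] chr_one[OF H ch] by simp
  then show ?thesis using hom ext by blast
qed


lemma ext_free:
  assumes H: "subgroup H G" and ch: "\<phi> \<in> hom (G\<lparr>carrier := H\<rparr>) circle_group"
    and e: "e \<in> carrier G" and w: "norm w = 1"
    and free: "\<And>c::int. e [^] c \<in> H \<Longrightarrow> c = 0"
  shows "\<exists>\<psi>. \<psi> \<in> hom (G\<lparr>carrier := span1 G H e\<rparr>) circle_group \<and> (\<forall>x\<in>H. \<psi> x = \<phi> x) \<and> \<psi> e = w"
proof (rule ext_char[OF H ch e w])
  fix c :: int assume "e [^] c \<in> H"
  then have "c = 0" by (rule free)
  then show "\<phi> (e [^] c) = w powi c" using chr_one[OF H ch] by simp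
qed

lemma ext_half:
  assumes H: "subgroup H G" and ch: "\<phi> \<in> hom (G\<lparr>carrier := H\<rparr>) circle_group"
    and e: "e \<in> carrier G" and eH: "e \<notin> H" and r: "norm r = 1"
  shows "\<exists>\<psi>. \<psi> \<in> hom (G\<lparr>carrier := span1 G H e\<rparr>) circle_group \<and> (\<forall>x\<in>H. \<psi> x = \<phi> x) \<and> Re (\<psi> e * cnj r) \<le> 0"
proof (cases "\<forall>c::int. e [^] c \<in> H \<longrightarrow> c = 0")
  case True
  have "norm (- r) = 1" using r by simp
  then obtain \<psi> where \<psi>: "\<psi> \<in> hom (G\<lparr>carrier := span1 G H e\<rparr>) circle_group" "\<forall>x\<in>H. \<psi> x = \<phi> x" "\<psi> e = - r"
    using ext_free[OF H ch e, of "- r"] True by blast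
  have "r * cnj r = 1" using r by (metis complex_norm_square mult.commute norm_one of_real_1 power_one)
  then have "Re (\<psi> e * cnj r) = -1" using \<psi>(3) by simp
  then show ?thesis using \<psi> by (intro exI[of _ \<psi>]) simp
next
  case False
  then obtain c0 :: int where c0: "e [^] c0 \<in> H" "c0 \<noteq> 0" by blast
  have "e [^] (int (nat \<bar>c0\<bar>)) \<in> H"
  proof (cases "c0 \<ge> 0")
    case True
    then show ?thesis using c0 by simp
  next
    case False
    then have "e [^] (int (nat \<bar>c0\<bar>)) = inv (e [^] c0)" using e by (simp add: int_pow_neg[symmetric])
    then show ?thesis using subgroup.m_inv_closed[OF H c0(1)] by simp
  qed
  then have ex: "\<exists>n::nat. 0 < n \<and> e [^] (int n) \<in> H" using c0 by (intro exI[of _ "nat \<bar>c0\<bar>"]) simp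
  define m where "m = (LEAST n::nat. 0 < n \<and> e [^] (int n) \<in> H)"
  have m: "0 < m" "e [^] (int m) \<in> H" using LeastI_ex[OF ex] unfolding m_def by auto
  have mmin: "\<And>n. n < m \<Longrightarrow> \<not> (0 < n \<and> e [^] (int n) \<in> H)" unfolding m_def by (rule not_less_Least)
  have "m \<noteq> 1" using m eH e by auto
  then have m2: "m \<ge> 2" using m by simp
  define v where "v = \<phi> (e [^] (int m))"
  have v: "norm v = 1" using ch m unfolding v_def hom_sub_iff by simp
  obtain w where w: "norm w = 1" "w ^ m = v" "Re (w * cnj r) \<le> 0" using root_half[OF m2 v r] by blast
  have cnd: "\<phi> (e [^] c) = w powi c" if ec: "e [^] c \<in> H" for c :: int
  proof -
    define q where "q = c div int m"
    define s where "s = c mod int m"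
    have cq: "c = int m * q + s" unfolding q_def s_def by simp
    have s0: "0 \<le> s" "s < int m" using m unfolding s_def by auto
    have emq: "e [^] (int m * q) = (e [^] (int m)) [^] q" using e by (simp add: int_pow_pow)
    have emqH: "e [^] (int m * q) \<in> H" unfolding emq by (rule subgroup_int_pow[OF H m(2)])
    have "e [^] s = e [^] (c - int m * q)" using cq by simp
    also have "\<dots> = e [^] c \<otimes> inv (e [^] (int m * q))" using e by (rule int_pow_diff)
    finally have "e [^] s \<in> H" using subgroup.m_closed[OF H ec subgroup.m_inv_closed[OF H emqH]] by simp
    then have "s = 0"
    proof -
      assume esH: "e [^] s \<in> H"
      show "s = 0"
      proof (rule ccontr)
        assume "s \<noteq> 0"
        then have "0 < nat s" "nat s < m" using s0 by auto
        moreover have "e [^] (int (nat s)) \<in> H" using esH s0 by simp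
        ultimately show False using mmin by blast
      qed
    qed
    then have "c = int m * q" using cq by simp
    then have "\<phi> (e [^] c) = v powi q" unfolding v_def using emq chr_int_pow[OF H ch m(2)] by simp
    also have "\<dots> = w powi (int m * q)" using w(2) power_int_power[of w m q] by simp
    finally show ?thesis using \<open>c = int m * q\<close> by simp
  qed
  obtain \<psi> where "\<psi> \<in> hom (G\<lparr>carrier := span1 G H e\<rparr>) circle_group" "\<forall>x\<in>H. \<psi> x = \<phi> x" "\<psi> e = w"
    using ext_char[OF H ch e w(1) cnd] by blast
  then show ?thesis using w(3) by (intro exI[of _ \<psi>]) simp
qed

lemma span1_countable:
  assumes "countable H"
  shows "countable (span1 G H e)"
proof -
  have "span1 G H e = (\<lambda>p. fst p \<otimes> e [^] (snd p :: int)) ` (H \<times> UNIV)" unfolding span1_def by force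
  then show ?thesis using assms by simp
qed

lemma spanl_countable: "countable (spanl G fs)"
  by (induction fs) (auto intro: span1_countable)

end


lemma acc_point:
  assumes K: "compactin X K" and B: "B \<subseteq> K" "infinite B"
  shows "\<exists>p\<in>K. \<forall>U. openin X U \<and> p \<in> U \<longrightarrow> infinite (U \<inter> B)"
proof (rule ccontr)
  assume "\<not> ?thesis"
  then have "\<forall>p\<in>K. \<exists>U. openin X U \<and> p \<in> U \<and> finite (U \<inter> B)" by blast
  then obtain Uf where Uf: "\<And>p. p \<in> K \<Longrightarrow> openin X (Uf p) \<and> p \<in> Uf p \<and> finite (Uf p \<inter> B)" by metis
  have "\<exists>\<F>. finite \<F> \<and> \<F> \<subseteq> Uf ` K \<and> K \<subseteq> \<Union>\<F>"
    using K unfolding compactin_def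
    apply (elim conjE)
    apply (drule spec[of _ "Uf ` K"])
    using Uf by blast
  then obtain F where F: "finite F" "F \<subseteq> Uf ` K" "K \<subseteq> \<Union>F" by blast
  have "B \<subseteq> (\<Union>V\<in>F. V \<inter> B)" using F(3) B(1) by blast
  moreover have "finite (\<Union>V\<in>F. V \<inter> B)"
  proof (rule finite_UN_I[OF F(1)])
    fix V assume "V \<in> F"
    then obtain p where "p \<in> K" "V = Uf p" using F(2) by blast
    then show "finite (V \<inter> B)" using Uf by blast
  qed
  ultimately show False using B(2) finite_subset by blast
qed

lemma open_preimage_circle:
  assumes g: "continuous_map X circle_top g" and T: "open T"
  shows "openin X {x \<in> topspace X. g x \<in> T}"
proof -
  have "openin circle_top (sphere 0 1 \<inter> T)" unfolding circle_top_def using T by (auto simp: openin_open)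
  then have "openin X {x \<in> topspace X. g x \<in> sphere 0 1 \<inter> T}" by (rule openin_continuous_map_preimage[OF g])
  moreover have "\<And>x. x \<in> topspace X \<Longrightarrow> g x \<in> sphere 0 1"
    using g unfolding continuous_map_def circle_top_def by auto
  ultimately show ?thesis
    by (smt (verit, best) Collect_cong IntD2 IntI)
qed

lemma open_Re_pos: "open {w::complex. 0 < Re (w * c)}"
  by (rule open_Collect_less) (intro continuous_intros)+

lemma open_ne1: "open {w::complex. w \<noteq> 1}"
  by (rule open_Collect_neq) (intro continuous_intros)+

lemma pin:
  assumes tag: "topological_ab_group G X" and ph: "property_h G X"
    and N0: "subgroup N0 G" "countable N0" and p: "p \<in> carrier G" "p \<notin> N0"
  shows "\<exists>g \<in> hom G circle_group. continuous_map X circle_top g \<and> (\<forall>x\<in>N0. g x = 1) \<and> g p \<noteq> 1"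
proof -
  interpret comm_group G using tag unfolding topological_ab_group_def by blast
  have triv: "(\<lambda>_. 1) \<in> hom (G\<lparr>carrier := N0\<rparr>) circle_group" by (simp add: hom_sub_iff)
  obtain \<psi> where \<psi>: "\<psi> \<in> hom (G\<lparr>carrier := span1 G N0 p\<rparr>) circle_group" "\<forall>x\<in>N0. \<psi> x = 1" "Re (\<psi> p * cnj 1) \<le> 0"
    using ext_half[OF N0(1) triv p, of 1] by auto
  have S: "subgroup (span1 G N0 p) G" "countable (span1 G N0 p)"
    using span1_subgroup[OF N0(1) p(1)] span1_countable[OF N0(2)] by auto
  have "h_embedded G X (span1 G N0 p)" using ph S unfolding property_h_def by blast
  then obtain g where g: "g \<in> hom G circle_group" "continuous_map X circle_top g" "\<forall>x\<in>span1 G N0 p. g x = \<psi> x"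
    using \<psi>(1) unfolding h_embedded_def by blast
  have "\<forall>x\<in>N0. g x = 1" using g(3) \<psi>(2) span1_sup(1)[OF N0(1) p(1)] by auto
  moreover have "g p \<noteq> 1" using g(3) \<psi>(3) span1_sup(2)[OF N0(1) p(1)] by auto
  ultimately show ?thesis using g by blast
qed


lemma diag:
  assumes tag: "topological_ab_group G X" and ph: "property_h G X" and K: "compactin X K"
    and N0: "subgroup N0 G" "countable N0" and A: "A \<subseteq> K \<inter> N0" "infinite A"
    and sep: "\<And>p S. p \<in> N0 \<Longrightarrow> S \<subseteq> A \<Longrightarrow> infinite S \<Longrightarrow> \<exists>S'. S' \<subseteq> S \<and> infinite S' \<and>
        (\<exists>g \<in> hom G circle_group. continuous_map X circle_top g \<and> (\<forall>a\<in>S'. Re (g a * cnj (g p)) \<le> 0))"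
  shows False
proof -
  have carr: "topspace X = carrier G" using tag unfolding topological_ab_group_def by blast
  have N0ne: "N0 \<noteq> {}" using subgroup.one_closed[OF N0(1)] by blast
  define pe where "pe = from_nat_into N0"
  have rpe: "range pe = N0" unfolding pe_def using range_from_nat_into[OF N0ne N0(2)] .
  have pe: "pe j \<in> N0" for j using rpe by blast
  define PP where "PP = (\<lambda>j (Sb :: 'a set \<times> 'a). fst Sb \<subseteq> A \<and> infinite (fst Sb) \<and> snd Sb \<in> fst Sb \<and>
      (\<exists>g \<in> hom G circle_group. continuous_map X circle_top g \<and> (\<forall>a\<in>fst Sb. Re (g a * cnj (g (pe j))) \<le> 0)))"
  define QQ where "QQ = (\<lambda>(j::nat) (Sb :: 'a set \<times> 'a) (Sb' :: 'a set \<times> 'a). fst Sb' \<subseteq> fst Sb - {snd Sb})"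
  have "\<exists>f. \<forall>j. PP j (f j) \<and> QQ j (f j) (f (Suc j))"
  proof (rule dependent_nat_choice)
    obtain S' where S': "S' \<subseteq> A" "infinite S'"
      "\<exists>g \<in> hom G circle_group. continuous_map X circle_top g \<and> (\<forall>a\<in>S'. Re (g a * cnj (g (pe 0))) \<le> 0)"
      using sep[OF pe order_refl A(2)] by blast
    obtain b where "b \<in> S'" using S'(2) by (metis finite.emptyI ex_in_conv)
    then show "\<exists>x. PP 0 x" unfolding PP_def using S' by (intro exI[of _ "(S', b)"]) auto
  next
    fix x j assume "PP j x"
    obtain S b where x: "x = (S, b)" by fastforce
    have S: "S \<subseteq> A" "infinite S" using \<open>PP j x\<close> unfolding x PP_def by auto
    have S2: "S - {b} \<subseteq> A" "infinite (S - {b})" using S by auto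
    obtain S' where S': "S' \<subseteq> S - {b}" "infinite S'"
      "\<exists>g \<in> hom G circle_group. continuous_map X circle_top g \<and> (\<forall>a\<in>S'. Re (g a * cnj (g (pe (Suc j)))) \<le> 0)"
      using sep[OF pe[of "Suc j"] S2] by blast
    obtain b' where "b' \<in> S'" using S'(2) by (metis finite.emptyI ex_in_conv)
    then show "\<exists>y. PP (Suc j) y \<and> QQ j x y"
      unfolding PP_def QQ_def x using S' S by (intro exI[of _ "(S', b')"]) auto
  qed
  then obtain f where f: "\<And>j. PP j (f j)" "\<And>j. QQ j (f j) (f (Suc j))" by blast
  define Ss where "Ss = (\<lambda>j. fst (f j))"
  define bs where "bs = (\<lambda>j. snd (f j))"
  have Ssuc: "Ss (Suc j) \<subseteq> Ss j - {bs j}" for j using f(2)[of j] unfolding QQ_def Ss_def bs_def by simp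
  have nest: "Ss (i + k) \<subseteq> Ss i" for i k
  proof (induction k)
    case 0
    then show ?case by simp
  next
    case (Suc k)
    then show ?case using Ssuc[of "i + k"] by auto
  qed
  have nest': "i \<le> j \<Longrightarrow> Ss j \<subseteq> Ss i" for i j using nest[of i "j - i"] by simp
  have bsS: "bs j \<in> Ss j" for j using f(1)[of j] unfolding PP_def Ss_def bs_def by simp
  have SsA: "Ss j \<subseteq> A" for j using f(1)[of j] unfolding PP_def Ss_def by simp
  have neq: "bs j \<noteq> bs i" if "i < j" for i j
  proof -
    have "Ss j \<subseteq> Ss (Suc i)" using nest'[of "Suc i" j] that by simp
    then show ?thesis using Ssuc[of i] bsS[of j] by blast
  qed
  have inj: "inj bs"
  proof (rule injI)
    fix i j assume "bs i = bs j"
    then show "i = j" using neq[of i j] neq[of j i] by (cases i j rule: linorder_cases) auto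
  qed
  define B where "B = range bs"
  have BA: "B \<subseteq> A" unfolding B_def using bsS SsA by blast
  have Binf: "infinite B" unfolding B_def using inj finite_imageD infinite_UNIV_nat by blast
  obtain p where p: "p \<in> K" "\<And>U. openin X U \<Longrightarrow> p \<in> U \<Longrightarrow> infinite (U \<inter> B)"
    using acc_point[OF K _ Binf] BA A(1) by blast
  have pc: "p \<in> carrier G" using p(1) K carr unfolding compactin_def by blast
  have pN: "p \<in> N0"
  proof (rule ccontr)
    assume "p \<notin> N0"
    then obtain g where g: "g \<in> hom G circle_group" "continuous_map X circle_top g" "\<forall>x\<in>N0. g x = 1" "g p \<noteq> 1"
      using pin[OF tag ph N0 pc] by blast
    let ?U = "{x \<in> topspace X. g x \<in> {w. w \<noteq> 1}}"
    have "openin X ?U" by (rule open_preimage_circle[OF g(2) open_ne1])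
    moreover have "p \<in> ?U" using g(4) pc carr by simp
    ultimately have "infinite (?U \<inter> B)" by (rule p(2))
    moreover have "?U \<inter> B = {}" using BA A(1) g(3) by auto
    ultimately show False by simp
  qed
  then obtain j where j: "p = pe j" using rpe by blast
  obtain g where g: "g \<in> hom G circle_group" "continuous_map X circle_top g" "\<forall>a\<in>Ss j. Re (g a * cnj (g p)) \<le> 0"
    using f(1)[of j] unfolding PP_def Ss_def j by blast
  let ?U = "{x \<in> topspace X. g x \<in> {w. 0 < Re (w * cnj (g p))}}"
  have "openin X ?U" by (rule open_preimage_circle[OF g(2) open_Re_pos])
  moreover have "p \<in> ?U"
  proof -
    have "norm (g p) = 1" using g(1) pc unfolding hom_full_iff by simp
    then have "g p * cnj (g p) = 1" by (metis complex_norm_square mult.commute norm_one of_real_1 power_one)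
    then have "0 < Re (g p * cnj (g p))" by simp
    then show ?thesis using pc carr by blast
  qed
  ultimately have inf: "infinite (?U \<inter> B)" by (rule p(2))
  have "\<not> (?U \<inter> B \<subseteq> bs ` {..<j})" using inf finite_subset by blast
  then obtain i where i: "bs i \<in> ?U" "i \<ge> j" unfolding B_def by force
  have "bs i \<in> Ss j" using bsS[of i] nest'[OF i(2)] by blast
  then have "Re (g (bs i) * cnj (g p)) \<le> 0" using g(3) by blast
  then show False using i(1) by simp
qed



lemma H_mono_gen:
  assumes sub: "\<And>n. H n \<subseteq> H (Suc n)"
  shows "i \<le> j \<Longrightarrow> H i \<subseteq> H j"
  using sub by (induction j) (auto simp: le_Suc_eq)

lemma unit_cnj: "norm (u::complex) = 1 \<Longrightarrow> cnj u = inverse u"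
  by (metis complex_norm_square inverse_unique mult.commute norm_one of_real_1 power_one)

lemma caseB:
  assumes tag: "topological_ab_group G X" and ph: "property_h G X" and K: "compactin X K"
    and Kinf: "infinite K"
    and fin: "\<And>fs. set fs \<subseteq> carrier G \<Longrightarrow> finite (K \<inter> spanl G fs)"
  shows False
proof -
  interpret comm_group G using tag unfolding topological_ab_group_def by blast
  have carr: "topspace X = carrier G" using tag unfolding topological_ab_group_def by blast
  have Kc: "K \<subseteq> carrier G" using K carr unfolding compactin_def by blast
  define PL where "PL = (\<lambda>(n::nat) (xs::'a list). set xs \<subseteq> K \<and> (n = 0 \<longrightarrow> xs = []))"
  define QL where "QL = (\<lambda>(n::nat) (xs::'a list) ys. \<exists>a. ys = a # xs \<and> a \<in> K \<and> a \<notin> spanl G xs)"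
  have "\<exists>f. \<forall>n. PL n (f n) \<and> QL n (f n) (f (Suc n))"
  proof (rule dependent_nat_choice)
    show "\<exists>x. PL 0 x" unfolding PL_def by (intro exI[of _ "[]"]) simp
  next
    fix xs n assume "PL n xs"
    then have xs: "set xs \<subseteq> K" unfolding PL_def by simp
    then have "finite (K \<inter> spanl G xs)" using fin Kc by blast
    then obtain a where "a \<in> K" "a \<notin> spanl G xs" using Kinf
      by (metis Diff_iff finite_Diff2 finite_subset subsetI Int_iff infinite_imp_nonempty)
    then show "\<exists>y. PL (Suc n) y \<and> QL n xs y" unfolding PL_def QL_def using xs
      by (intro exI[of _ "a # xs"]) auto
  qed
  then obtain Ls where Ls: "\<And>n. PL n (Ls n)" "\<And>n. QL n (Ls n) (Ls (Suc n))" by blast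
  define a where "a = (\<lambda>n. hd (Ls (Suc n)))"
  define H where "H = (\<lambda>n. spanl G (Ls n))"
  have LsS: "Ls (Suc n) = a n # Ls n" and aK: "a n \<in> K" and anH: "a n \<notin> H n" for n
    using Ls(2)[of n] unfolding QL_def a_def H_def by auto
  have H0: "H 0 = {\<one>\<^bsub>G\<^esub>}" using Ls(1)[of 0] unfolding PL_def H_def by simp
  have LsK: "set (Ls n) \<subseteq> K" for n using Ls(1)[of n] unfolding PL_def by simp
  have Hsub: "subgroup (H n) G" for n unfolding H_def using spanl_subgroup LsK Kc by blast
  have HSuc: "H (Suc n) = span1 G (H n) (a n)" for n unfolding H_def LsS by simp
  have ac: "a n \<in> carrier G" for n using aK Kc by blast
  have Hstep: "H n \<subseteq> H (Suc n)" for n unfolding HSuc using span1_sup(1)[OF Hsub ac] .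
  have Hmono: "i \<le> j \<Longrightarrow> H i \<subseteq> H j" for i j using H_mono_gen[of H, OF Hstep] .
  have aH: "a n \<in> H (Suc n)" for n unfolding HSuc using span1_sup(2)[OF Hsub ac] .
  have aH': "i < j \<Longrightarrow> a i \<in> H j" for i j using aH[of i] Hmono[of "Suc i" j] by auto
  have ainj: "inj a"
  proof (rule injI)
    fix i j assume eq: "a i = a j"
    show "i = j"
    proof (rule ccontr)
      assume "i \<noteq> j"
      then show False
      proof (cases "i < j")
        case True
        then show False using aH'[OF True] anH[of j] eq by simp
      next
        case False
        then have "j < i" using \<open>i \<noteq> j\<close> by simp
        then show False using aH'[of j i] anH[of i] eq by simp
      qed
    qed
  qed
  define N0 where "N0 = (\<Union>n. H n)"
  have N0sub: "subgroup N0 G"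
  proof (rule subgroupI)
    show "N0 \<subseteq> carrier G" unfolding N0_def using Hsub subgroup.subset by blast
    show "N0 \<noteq> {}" unfolding N0_def using H0 by blast
  next
    fix x assume "x \<in> N0"
    then obtain n where "x \<in> H n" unfolding N0_def by blast
    then have "inv\<^bsub>G\<^esub> x \<in> H n" by (rule subgroup.m_inv_closed[OF Hsub])
    then show "inv\<^bsub>G\<^esub> x \<in> N0" unfolding N0_def by blast
  next
    fix x y assume "x \<in> N0" "y \<in> N0"
    then obtain i j where "x \<in> H i" "y \<in> H j" unfolding N0_def by blast
    then have "x \<in> H (max i j)" "y \<in> H (max i j)" using Hmono[of i "max i j"] Hmono[of j "max i j"] by auto
    then have "x \<otimes>\<^bsub>G\<^esub> y \<in> H (max i j)" by (rule subgroup.m_closed[OF Hsub])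
    then show "x \<otimes>\<^bsub>G\<^esub> y \<in> N0" unfolding N0_def by blast
  qed
  have N0c: "countable N0" unfolding N0_def H_def by (intro countable_UN) (auto intro: spanl_countable)
  have AN: "range a \<subseteq> K \<inter> N0" unfolding N0_def using aK aH by blast
  have Ainf: "infinite (range a)" using ainj finite_imageD infinite_UNIV_nat by blast
  show False
  proof (rule diag[OF tag ph K N0sub N0c AN Ainf])
    fix p S assume pN: "p \<in> N0" and SA: "S \<subseteq> range a" and Sinf: "infinite S"
    obtain np where pH: "p \<in> H np" using pN unfolding N0_def by blast
    define PC where "PC = (\<lambda>n (\<phi> :: 'a \<Rightarrow> complex). \<phi> \<in> hom (G\<lparr>carrier := H n\<rparr>) circle_group)"
    define QC where "QC = (\<lambda>n (\<phi> :: 'a \<Rightarrow> complex) \<phi>'. (\<forall>x\<in>H n. \<phi>' x = \<phi> x) \<and>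
        (np \<le> n \<longrightarrow> Re (\<phi>' (a n) * cnj (\<phi> p)) \<le> 0))"
    have "\<exists>C. \<forall>n. PC n (C n) \<and> QC n (C n) (C (Suc n))"
    proof (rule dependent_nat_choice)
      show "\<exists>x. PC 0 x" unfolding PC_def by (intro exI[of _ "\<lambda>_. 1"]) (simp add: hom_sub_iff)
    next
      fix \<phi> n assume "PC n \<phi>"
      then have ch: "\<phi> \<in> hom (G\<lparr>carrier := H n\<rparr>) circle_group" unfolding PC_def by simp
      define r where "r = (if np \<le> n then \<phi> p else 1)"
      have r: "norm r = 1"
      proof (cases "np \<le> n")
        case True
        then have "p \<in> H n" using pH Hmono by blast
        then show ?thesis using ch True unfolding r_def hom_sub_iff by simp
      next
        case False
        then show ?thesis unfolding r_def by simp
      qed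
      obtain \<psi> where \<psi>: "\<psi> \<in> hom (G\<lparr>carrier := span1 G (H n) (a n)\<rparr>) circle_group"
        "\<forall>x\<in>H n. \<psi> x = \<phi> x" "Re (\<psi> (a n) * cnj r) \<le> 0"
        using ext_half[OF Hsub ch ac anH r] by blast
      show "\<exists>y. PC (Suc n) y \<and> QC n \<phi> y"
        unfolding PC_def QC_def HSuc using \<psi> r_def by (intro exI[of _ \<psi>]) auto
    qed
    then obtain C where C: "\<And>n. PC n (C n)" "\<And>n. QC n (C n) (C (Suc n))" by blast
    have compat: "x \<in> H n \<Longrightarrow> C (n + k) x = C n x" for n k x
    proof (induction k)
      case 0
      then show ?case by simp
    next
      case (Suc k)
      have "x \<in> H (n + k)" using Suc.prems Hmono[of n "n + k"] by auto
      then show ?case using C(2)[of "n + k"] Suc unfolding QC_def by simp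
    qed
    define chr where "chr = (\<lambda>x. C (LEAST n. x \<in> H n) x)"
    have chiH: "chr x = C n x" if x: "x \<in> H n" for x n
    proof -
      define m where "m = (LEAST n. x \<in> H n)"
      have m: "x \<in> H m" "m \<le> n" using LeastI[of "\<lambda>n. x \<in> H n", OF x] Least_le[of "\<lambda>n. x \<in> H n", OF x]
        unfolding m_def by auto
      have "C (m + (n - m)) x = C m x" using compat[OF m(1)] .
      then show ?thesis unfolding chr_def m_def[symmetric] using m by simp
    qed
    have chihom: "chr \<in> hom (G\<lparr>carrier := N0\<rparr>) circle_group"
      unfolding hom_sub_iff
    proof (intro conjI ballI)
      fix x assume "x \<in> N0"
      then obtain n where x: "x \<in> H n" unfolding N0_def by blast
      then show "chr x \<in> sphere 0 1" using chiH[OF x] C(1)[of n] unfolding PC_def hom_sub_iff by simp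
    next
      fix x y assume "x \<in> N0" "y \<in> N0"
      then obtain i j where "x \<in> H i" "y \<in> H j" unfolding N0_def by blast
      then have xy: "x \<in> H (max i j)" "y \<in> H (max i j)" using Hmono[of i "max i j"] Hmono[of j "max i j"] by auto
      then have "x \<otimes>\<^bsub>G\<^esub> y \<in> H (max i j)" by (rule subgroup.m_closed[OF Hsub])
      then show "chr (x \<otimes>\<^bsub>G\<^esub> y) = chr x * chr y" using chiH xy C(1)[of "max i j"] unfolding PC_def hom_sub_iff by simp
    qed
    have "h_embedded G X N0" using ph N0sub N0c unfolding property_h_def by blast
    then obtain g where g: "g \<in> hom G circle_group" "continuous_map X circle_top g" "\<forall>x\<in>N0. g x = chr x"
      using chihom unfolding h_embedded_def by blast
    define S' where "S' = S - a ` {..<np}"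
    have "infinite S'" unfolding S'_def using Sinf by auto
    moreover have "\<forall>b\<in>S'. Re (g b * cnj (g p)) \<le> 0"
    proof
      fix b assume "b \<in> S'"
      then obtain n where n: "b = a n" "np \<le> n" unfolding S'_def using SA by force
      have "a n \<in> N0" using AN by blast
      then have "g b = C (Suc n) (a n)" using g(3) chiH[OF aH[of n]] n(1) by simp
      moreover have "p \<in> H n" using pH Hmono n(2) by blast
      then have "g p = C n p" using g(3) chiH pN by auto
      ultimately show "Re (g b * cnj (g p)) \<le> 0" using C(2)[of n] n(2) unfolding QC_def by simp
    qed
    ultimately show "\<exists>S'. S' \<subseteq> S \<and> infinite S' \<and>
        (\<exists>g \<in> hom G circle_group. continuous_map X circle_top g \<and> (\<forall>a\<in>S'. Re (g a * cnj (g p)) \<le> 0))"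
      using g unfolding S'_def by blast
  qed
qed



lemma translate_compact:
  assumes tag: "topological_ab_group G X" and K: "compactin X K" and t: "t \<in> carrier G"
  shows "compactin X ((\<lambda>x. x \<otimes>\<^bsub>G\<^esub> t) ` K)"
proof -
  have carr: "topspace X = carrier G" and mc: "continuous_map (prod_topology X X) X (\<lambda>(x, y). x \<otimes>\<^bsub>G\<^esub> y)"
    using tag unfolding topological_ab_group_def by blast+
  have "continuous_map X (prod_topology X X) (\<lambda>x. (x, t))"
    using t carr by (intro continuous_map_pairedI) (auto simp: continuous_map_const)
  then have "continuous_map X X ((\<lambda>(x, y). x \<otimes>\<^bsub>G\<^esub> y) \<circ> (\<lambda>x. (x, t)))"
    using mc by (rule continuous_map_compose)
  then have "continuous_map X X (\<lambda>x. x \<otimes>\<^bsub>G\<^esub> t)" by (simp add: o_def)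
  then show ?thesis using K by (rule image_compactin[rotated])
qed

context comm_group
begin

lemma coset_eq:
  assumes "h \<in> carrier G" "h' \<in> carrier G" "e \<in> carrier G" "h \<otimes> e [^] (c::int) = h' \<otimes> e [^] (c'::int)"
  shows "e [^] (c - c') = inv h \<otimes> h'"
proof -
  have hc: "h \<in> carrier G" "h' \<in> carrier G" using assms by auto
  have e: "e \<in> carrier G" using assms by auto
  have eq: "h \<otimes> e [^] c = h' \<otimes> e [^] c'" using assms by auto
  have ec: "e [^] c \<in> carrier G" "e [^] c' \<in> carrier G" using e by auto
  have "(inv h \<otimes> h') \<otimes> e [^] c' = inv h \<otimes> (h' \<otimes> e [^] c')" using hc ec by (simp add: m_assoc)
  also have "\<dots> = inv h \<otimes> (h \<otimes> e [^] c)" using eq by simp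
  also have "\<dots> = e [^] c" using hc ec by (simp add: m_assoc[symmetric])
  finally have "(inv h \<otimes> h') \<otimes> e [^] c' = e [^] c" .
  then have "e [^] c \<otimes> inv (e [^] c') = inv h \<otimes> h'"
    using inv_solve_right'[of "inv h \<otimes> h'" "e [^] c" "e [^] c'"] hc ec by simp
  moreover have "e [^] (c - c') = e [^] c \<otimes> inv (e [^] c')" using e by (rule int_pow_diff)
  ultimately show ?thesis by simp
qed

end

lemma caseA:
  assumes tag: "topological_ab_group G X" and ph: "property_h G X"
  shows "compactin X K' \<Longrightarrow> set fs \<subseteq> carrier G \<Longrightarrow> infinite (K' \<inter> spanl G fs) \<Longrightarrow> False"
proof (induction "length fs" arbitrary: fs K' rule: less_induct)
  case less
  interpret comm_group G using tag unfolding topological_ab_group_def by blast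
  have carr: "topspace X = carrier G" using tag unfolding topological_ab_group_def by blast
  show False
  proof (cases fs)
    case Nil
    then show False using less.prems(3) by simp
  next
    case (Cons f fs')
    define H' where "H' = spanl G fs'"
    have fc: "f \<in> carrier G" and fs'c: "set fs' \<subseteq> carrier G" using less.prems(2) Cons by auto
    have H'sub: "subgroup H' G" unfolding H'_def using spanl_subgroup[OF fs'c] .
    have H'c: "H' \<subseteq> carrier G" using subgroup.subset[OF H'sub] .
    define H where "H = span1 G H' f"
    have Hdef: "spanl G fs = H" unfolding H_def H'_def Cons by simp
    have Hsub: "subgroup H G" unfolding H_def using span1_subgroup[OF H'sub fc] .
    have Hcount: "countable H" using spanl_countable Hdef by metis
    have IH: "finite (K'' \<inter> H')" if "compactin X K''" for K''
      using less.hyps[of fs' K''] that fs'c Cons unfolding H'_def by auto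
    have K'c: "K' \<subseteq> carrier G" using less.prems(1) carr unfolding compactin_def by blast
    define Cs where "Cs = (\<lambda>c::int. K' \<inter> {x. \<exists>h\<in>H'. x = h \<otimes>\<^bsub>G\<^esub> f [^]\<^bsub>G\<^esub> c})"
    have Csfin: "finite (Cs c)" for c
    proof -
      define \<tau> where "\<tau> = (\<lambda>x. x \<otimes>\<^bsub>G\<^esub> f [^]\<^bsub>G\<^esub> (- c))"
      have "compactin X (\<tau> ` K')" unfolding \<tau>_def using translate_compact[OF tag less.prems(1)] fc by simp
      then have fin: "finite (\<tau> ` K' \<inter> H')" by (rule IH)
      have "\<tau> ` Cs c \<subseteq> \<tau> ` K' \<inter> H'"
      proof
        fix y assume "y \<in> \<tau> ` Cs c"
        then obtain x h where x: "x \<in> K'" "h \<in> H'" "x = h \<otimes>\<^bsub>G\<^esub> f [^]\<^bsub>G\<^esub> c" "y = \<tau> x"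
          unfolding Cs_def by blast
        have hc: "h \<in> carrier G" using x(2) H'c by blast
        have "\<tau> x = h \<otimes>\<^bsub>G\<^esub> (f [^]\<^bsub>G\<^esub> c \<otimes>\<^bsub>G\<^esub> f [^]\<^bsub>G\<^esub> (- c))"
          unfolding \<tau>_def x(3) using hc fc by (simp add: m_assoc)
        also have "f [^]\<^bsub>G\<^esub> c \<otimes>\<^bsub>G\<^esub> f [^]\<^bsub>G\<^esub> (- c) = \<one>\<^bsub>G\<^esub>"
          using int_pow_mult[OF fc, of c "- c"] by simp
        finally have "\<tau> x = h" using hc by simp
        then show "y \<in> \<tau> ` K' \<inter> H'" using x(1,2,4) by (metis IntI image_eqI)
      qed
      then have "finite (\<tau> ` Cs c)" using fin finite_subset by blast
      moreover have "inj_on \<tau> (Cs c)"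
        using inj_on_multc[of "f [^]\<^bsub>G\<^esub> (- c)"] fc K'c unfolding \<tau>_def Cs_def
        by (meson Int_lower1 inj_on_subset int_pow_closed subset_trans)
      ultimately show ?thesis using finite_imageD by blast
    qed
    have inCs: "\<exists>c. x \<in> Cs c" if xx: "x \<in> K' \<inter> H" for x
    proof -
      obtain h c where "h \<in> H'" "x = h \<otimes>\<^bsub>G\<^esub> f [^]\<^bsub>G\<^esub> (c::int)" using xx unfolding H_def by (blast elim: span1E)
      then show ?thesis using xx unfolding Cs_def by blast
    qed
    have infKH: "infinite (K' \<inter> H)" using less.prems(3) Hdef by simp
    show False
    proof (cases "\<forall>c::int. f [^]\<^bsub>G\<^esub> c \<in> H' \<longrightarrow> c = 0")
      case False
      then obtain c0 :: int where c0: "f [^]\<^bsub>G\<^esub> c0 \<in> H'" "c0 \<noteq> 0" by blast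
      define m :: int where "m = \<bar>c0\<bar>"
      have m: "0 < m" "f [^]\<^bsub>G\<^esub> m \<in> H'"
      proof -
        show "0 < m" using c0 unfolding m_def by simp
        show "f [^]\<^bsub>G\<^esub> m \<in> H'"
        proof (cases "c0 \<ge> 0")
          case True
          then show ?thesis using c0 unfolding m_def by simp
        next
          case False
          then have "f [^]\<^bsub>G\<^esub> m = inv\<^bsub>G\<^esub> (f [^]\<^bsub>G\<^esub> c0)" unfolding m_def using fc by (simp add: int_pow_neg[symmetric])
          then show ?thesis using subgroup.m_inv_closed[OF H'sub c0(1)] by simp
        qed
      qed
      have "K' \<inter> H \<subseteq> (\<Union>s\<in>{0..<m}. Cs s)"
      proof
        fix x assume x: "x \<in> K' \<inter> H"
        then obtain h c where h: "h \<in> H'" and xe: "x = h \<otimes>\<^bsub>G\<^esub> f [^]\<^bsub>G\<^esub> (c::int)" unfolding H_def by (blast elim: span1E)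
        have hc: "h \<in> carrier G" using h H'c by blast
        define q where "q = c div m"
        define s where "s = c mod m"
        have cq: "c = m * q + s" unfolding q_def s_def by simp
        have s0: "s \<in> {0..<m}" using m unfolding s_def by simp
        have "f [^]\<^bsub>G\<^esub> c = f [^]\<^bsub>G\<^esub> (m * q) \<otimes>\<^bsub>G\<^esub> f [^]\<^bsub>G\<^esub> s" unfolding cq by (rule int_pow_mult[OF fc])
        moreover have fmq: "f [^]\<^bsub>G\<^esub> (m * q) = (f [^]\<^bsub>G\<^esub> m) [^]\<^bsub>G\<^esub> q" using fc by (simp add: int_pow_pow)
        ultimately have "x = (h \<otimes>\<^bsub>G\<^esub> (f [^]\<^bsub>G\<^esub> m) [^]\<^bsub>G\<^esub> q) \<otimes>\<^bsub>G\<^esub> f [^]\<^bsub>G\<^esub> s"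
          using xe hc fc by (simp add: m_assoc)
        moreover have "h \<otimes>\<^bsub>G\<^esub> (f [^]\<^bsub>G\<^esub> m) [^]\<^bsub>G\<^esub> q \<in> H'"
          by (rule subgroup.m_closed[OF H'sub h subgroup_int_pow[OF H'sub m(2)]])
        ultimately show "x \<in> (\<Union>s\<in>{0..<m}. Cs s)" using x s0 unfolding Cs_def by blast
      qed
      moreover have "finite (\<Union>s\<in>{0..<m}. Cs s)" using Csfin by simp
      ultimately show False using infKH finite_subset by blast
    next
      case True
      then have free: "\<And>c::int. f [^]\<^bsub>G\<^esub> c \<in> H' \<Longrightarrow> c = 0" by blast
      define co where "co = (\<lambda>x. SOME c::int. \<exists>h\<in>H'. x = h \<otimes>\<^bsub>G\<^esub> f [^]\<^bsub>G\<^esub> c)"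
      have coval: "co (h \<otimes>\<^bsub>G\<^esub> f [^]\<^bsub>G\<^esub> c) = c" if h: "h \<in> H'" for h c
      proof -
        let ?x = "h \<otimes>\<^bsub>G\<^esub> f [^]\<^bsub>G\<^esub> c"
        have "\<exists>c'::int. \<exists>h'\<in>H'. ?x = h' \<otimes>\<^bsub>G\<^esub> f [^]\<^bsub>G\<^esub> c'" using h by blast
        then have "\<exists>h'\<in>H'. ?x = h' \<otimes>\<^bsub>G\<^esub> f [^]\<^bsub>G\<^esub> co ?x"
          unfolding co_def by (rule someI_ex)
        then obtain h' where h': "h' \<in> H'" "?x = h' \<otimes>\<^bsub>G\<^esub> f [^]\<^bsub>G\<^esub> co ?x" by blast
        have "f [^]\<^bsub>G\<^esub> (c - co ?x) = inv\<^bsub>G\<^esub> h \<otimes>\<^bsub>G\<^esub> h'"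
          using coset_eq[of h h' f c "co ?x"] h h' H'c fc by blast
        moreover have "inv\<^bsub>G\<^esub> h \<otimes>\<^bsub>G\<^esub> h' \<in> H'"
          by (rule subgroup.m_closed[OF H'sub subgroup.m_inv_closed[OF H'sub h] h'(1)])
        ultimately have "f [^]\<^bsub>G\<^esub> (c - co ?x) \<in> H'" by simp
        then have "c - co ?x = 0" by (rule free)
        then show ?thesis by simp
      qed
      have coH: "\<exists>h\<in>H'. x = h \<otimes>\<^bsub>G\<^esub> f [^]\<^bsub>G\<^esub> co x" if xx: "x \<in> H" for x
      proof -
        obtain h c where "h \<in> H'" "x = h \<otimes>\<^bsub>G\<^esub> f [^]\<^bsub>G\<^esub> (c::int)" using xx unfolding H_def by (blast elim: span1E)
        then show ?thesis using coval[of h c] by auto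
      qed
      have triv: "(\<lambda>_. 1) \<in> hom (G\<lparr>carrier := H'\<rparr>) circle_group" by (simp add: hom_sub_iff)
      have psi: "\<exists>\<psi>. \<psi> \<in> hom (G\<lparr>carrier := H\<rparr>) circle_group \<and> (\<forall>x\<in>H. \<psi> x = z powi co x)"
        if z: "norm z = 1" for z
      proof -
        obtain \<psi> where \<psi>: "\<psi> \<in> hom (G\<lparr>carrier := H\<rparr>) circle_group" "\<forall>x\<in>H'. \<psi> x = 1" "\<psi> f = z"
          using ext_free[OF H'sub triv fc z free] unfolding H_def by blast
        have fH: "f \<in> H" unfolding H_def by (rule span1_sup(2)[OF H'sub fc])
        have H'H: "H' \<subseteq> H" unfolding H_def by (rule span1_sup(1)[OF H'sub fc])
        have "\<psi> x = z powi co x" if x: "x \<in> H" for x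
        proof -
          obtain h where h: "h \<in> H'" "x = h \<otimes>\<^bsub>G\<^esub> f [^]\<^bsub>G\<^esub> co x" using coH[OF x] by blast
          obtain k where k: "k = co x" by blast
          have hx: "x = h \<otimes>\<^bsub>G\<^esub> f [^]\<^bsub>G\<^esub> k" using h(2) k by simp
          have "f [^]\<^bsub>G\<^esub> k \<in> H" by (rule subgroup_int_pow[OF Hsub fH])
          then have "\<psi> x = \<psi> h * \<psi> (f [^]\<^bsub>G\<^esub> k)" unfolding hx using \<psi>(1) h(1) H'H unfolding hom_sub_iff by blast
          then have "\<psi> x = \<psi> h * \<psi> (f [^]\<^bsub>G\<^esub> co x)" using k by simp
          also have "\<dots> = z powi co x" using \<psi>(2) h(1) chr_int_pow[OF Hsub \<psi>(1) fH] \<psi>(3) by simp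
          finally show ?thesis .
        qed
        then show ?thesis using \<psi>(1) by blast
      qed
      have AN: "K' \<inter> H \<subseteq> K' \<inter> H" by simp
      show False
      proof (rule diag[OF tag ph less.prems(1) Hsub Hcount AN infKH])
        fix p S assume pH: "p \<in> H" and SA: "S \<subseteq> K' \<inter> H" and Sinf: "infinite S"
        define M where "M = (\<lambda>a. co a - co p) ` S"
        have Minf: "infinite M"
        proof
          assume Mfin: "finite M"
          have "co ` S = (\<lambda>m. m + co p) ` M" unfolding M_def by (auto simp: image_image)
          then have cofin: "finite (co ` S)" using Mfin by simp
          have "S \<subseteq> (\<Union>c\<in>co ` S. Cs c)"
          proof
            fix x assume x: "x \<in> S"
            then have "x \<in> K'" "x \<in> H" using SA by auto
            then show "x \<in> (\<Union>c\<in>co ` S. Cs c)" using coH[of x] x unfolding Cs_def by blast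
          qed
          moreover have "finite (\<Union>c\<in>co ` S. Cs c)" using cofin Csfin by (intro finite_UN_I) auto
          ultimately show False using Sinf finite_subset by blast
        qed
        obtain z where z: "norm z = 1" "infinite {n\<in>M. Re (z powi n) \<le> 0}" using num_int[OF Minf] by blast
        define S' where "S' = {a\<in>S. Re (z powi (co a - co p)) \<le> 0}"
        have "(\<lambda>a. co a - co p) ` S' = {n\<in>M. Re (z powi n) \<le> 0}" unfolding S'_def M_def by auto
        then have S'inf: "infinite S'" using z(2) by (metis finite_imageI)
        obtain \<psi> where \<psi>: "\<psi> \<in> hom (G\<lparr>carrier := H\<rparr>) circle_group" "\<forall>x\<in>H. \<psi> x = z powi co x" using psi[OF z(1)] by blast
        have "h_embedded G X H" using ph Hsub Hcount unfolding property_h_def by blast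
        then obtain g where g: "g \<in> hom G circle_group" "continuous_map X circle_top g" "\<forall>x\<in>H. g x = \<psi> x"
          using \<psi>(1) unfolding h_embedded_def by blast
        have z0: "z \<noteq> 0" using z by auto
        have "\<forall>a\<in>S'. Re (g a * cnj (g p)) \<le> 0"
        proof
          fix a assume a: "a \<in> S'"
          then have aH: "a \<in> H" using SA unfolding S'_def by auto
          have ga: "g a = z powi co a" using g(3) \<psi>(2) aH by simp
          have gp: "g p = z powi co p" using g(3) \<psi>(2) pH by simp
          have "norm (z powi co p) = 1" using z(1) by (simp add: norm_power_int)
          then have "cnj (z powi co p) = inverse (z powi co p)" by (rule unit_cnj)
          then have "cnj (g p) = inverse (z powi co p)" using gp by simp
          then have "g a * cnj (g p) = z powi (co a - co p)" using ga z0 by (simp add: power_int_diff field_simps)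
          then show "Re (g a * cnj (g p)) \<le> 0" using a unfolding S'_def by simp
        qed
        moreover have "S' \<subseteq> S" unfolding S'_def by blast
        ultimately show "\<exists>S'. S' \<subseteq> S \<and> infinite S' \<and>
            (\<exists>g \<in> hom G circle_group. continuous_map X circle_top g \<and> (\<forall>a\<in>S'. Re (g a * cnj (g p)) \<le> 0))"
          using g(1,2) S'inf by blast
      qed
    qed
  qed
qed

theorem lemma2p3:
  fixes G :: "('a, 'b) monoid_scheme" and X :: "'a topology"
  assumes "topological_ab_group G X"
    and "totally_bounded_group G X"
    and "property_h G X"
  shows "\<forall>K. compactin X K \<longrightarrow> finite K"
proof (intro allI impI)
  fix K assume K: "compactin X K"
  show "finite K"
  proof (rule ccontr)
    assume Kinf: "infinite K"
    show False
    proof (cases "\<exists>K' fs. compactin X K' \<and> set fs \<subseteq> carrier G \<and> infinite (K' \<inter> spanl G fs)")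
      case True
      then show False using caseA[OF assms(1,3)] by blast
    next
      case False
      then have fin: "\<And>fs. set fs \<subseteq> carrier G \<Longrightarrow> finite (K \<inter> spanl G fs)" using K by blast
      show False by (rule caseB[OF assms(1,3) K Kinf fin])
    qed
  qed
qed

end
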